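(* Let $\epsilon>0$, $n\ge1$, $s=\sqrt{e^\epsilon}$, let $\mathbf{w}\in\mathbb{R}^d$ be non-increasing, $c\in\mathbb{R}$, and $\mathbf{m}$ with $m_j\ge0$, $\sum_jm_j=1$. Let $J=\{j: m_j>0\}$ and for $j\in J$ put $K_j=\frac{w_j-c}{m_j}$, $t_j=\big|\frac{s}{s-1}K_j+c\big|$, $f_j=\big|\frac{-1}{s-1}K_j+c\big|$, and for $b\in\{0,1\}$, $g_{j,b}=\frac{bs-(1-b)}{s-1}K_j$. For the weighted sampling mechanism with parameters $(\epsilon,\mathbf{w},\mathbf{m},c)$: $$\mathrm{risk}_{\mathrm{MM}}=\frac dn\max_{j\in J}\max(f_j,t_j),\qquad \mathrm{risk}_{\mathrm{EM}}=\frac{\sum_{j\in J}m_j\big[(s+d-1)t_j+(s(d-1)+1)f_j\big]}{n(s+1)}\ \text{(for every input vote)},$$ $$\mathrm{risk}_{\mathrm{DD}}=d\Big(\max_{j\in J,\,b\in\{0,1\}}g_{j,b}-\min_{j\in J,\,b\in\{0,1\}}g_{j,b}\Big).$$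
   Context: Candidates are $A_1,\dots,A_d$; a vote $\pi$ is a linear ordering, $\pi_j$ the index of the candidate at rank $j$; the scored vote is $v$ with $v_{\pi_j}=w_j$. The weighted sampling mechanism on input $\pi$: (1) samples a rank $j^*$ with $\Pr[j^*=j]=m_j$, independently of $\pi$; (2) sets $B\in\{0,1\}^d$ with $B_{\pi_{j^*}}=1$, other entries $0$; (3) independently for each $k$, sets $\tilde B_k=1-B_k$ with probability $\frac1{s+1}$, else $\tilde B_k=B_k$; (4) outputs $\tilde v_k=\frac{(s+1)\tilde B_k-1}{s-1}\cdot\frac{w_{j^*}-c}{m_{j^*}}+c$. Let $\mathcal{D}_{\tilde v}$ be the set of all possible outputs (over all inputs and all randomness), $n$ the number of voters. Risk metrics: $\mathrm{risk}_{\mathrm{MM}}=\max_{\tilde v\in\mathcal{D}_{\tilde v}}\frac{|\tilde v|_1}{n}$; $\mathrm{risk}_{\mathrm{EM}}=\mathbb{E}[\frac{|\tilde v|_1}{n}]$ over the mechanism's randomness for a given input; $\mathrm{risk}_{\mathrm{DD}}=\max_{\tilde v,\tilde v'\in\mathcal{D}_{\tilde v}}|\tilde v-\tilde v'|_1$. *)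

theory Defs
  imports "HOL-Probability.Probability"
begin

text \<open>Candidates are indexed 0..d-1, ranks are 0..d-1 (rank 0 = top).
  A vote is a bijection pi of {..<d}; pi j is the candidate at rank j.
  Score vectors / outputs are functions nat => real; only coordinates k < d matter
  (outputs are set to 0 outside {..<d}).\<close>

definition l1 :: "nat \<Rightarrow> (nat \<Rightarrow> real) \<Rightarrow> real" where
  "l1 d v = (\<Sum>k<d. \<bar>v k\<bar>)"

definition is_vote :: "nat \<Rightarrow> (nat \<Rightarrow> nat) \<Rightarrow> bool" where
  "is_vote d \<pi> \<longleftrightarrow> bij_betw \<pi> {..<d} {..<d}"

definition ws_mech ::
  "real \<Rightarrow> nat \<Rightarrow> (nat \<Rightarrow> real) \<Rightarrow> (nat \<Rightarrow> real) \<Rightarrow> real \<Rightarrow> (nat \<Rightarrow> nat) \<Rightarrow> (nat \<Rightarrow> real) pmf" where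
  "ws_mech \<epsilon> d w m c \<pi> =
     (let s = sqrt (exp \<epsilon>) in
      do {
        j \<leftarrow> embed_pmf (\<lambda>j. if j < d then m j else 0);
        flip \<leftarrow> Pi_pmf {..<d} False (\<lambda>_. bernoulli_pmf (1 / (s + 1)));
        let B = (\<lambda>k. k = \<pi> j);
        let Bt = (\<lambda>k. if flip k then \<not> B k else B k);
        return_pmf (\<lambda>k. if k < d then
             ((s + 1) * (if Bt k then 1 else 0) - 1) / (s - 1) * ((w j - c) / m j) + c
           else 0)
      })"

definition ws_outputs ::
  "real \<Rightarrow> nat \<Rightarrow> (nat \<Rightarrow> real) \<Rightarrow> (nat \<Rightarrow> real) \<Rightarrow> real \<Rightarrow> (nat \<Rightarrow> real) set" where
  "ws_outputs \<epsilon> d w m c = (\<Union>\<pi>\<in>{\<pi>. is_vote d \<pi>}. set_pmf (ws_mech \<epsilon> d w m c \<pi>))"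

definition risk_MM ::
  "real \<Rightarrow> nat \<Rightarrow> nat \<Rightarrow> (nat \<Rightarrow> real) \<Rightarrow> (nat \<Rightarrow> real) \<Rightarrow> real \<Rightarrow> real" where
  "risk_MM \<epsilon> n d w m c = Max ((\<lambda>v. l1 d v / real n) ` ws_outputs \<epsilon> d w m c)"

definition risk_EM ::
  "real \<Rightarrow> nat \<Rightarrow> nat \<Rightarrow> (nat \<Rightarrow> real) \<Rightarrow> (nat \<Rightarrow> real) \<Rightarrow> real \<Rightarrow> (nat \<Rightarrow> nat) \<Rightarrow> real" where
  "risk_EM \<epsilon> n d w m c \<pi> = measure_pmf.expectation (ws_mech \<epsilon> d w m c \<pi>) (\<lambda>v. l1 d v / real n)"

definition risk_DD ::
  "real \<Rightarrow> nat \<Rightarrow> (nat \<Rightarrow> real) \<Rightarrow> (nat \<Rightarrow> real) \<Rightarrow> real \<Rightarrow> real" where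
  "risk_DD \<epsilon> d w m c =
     Max ((\<lambda>(v, v'). l1 d (\<lambda>k. v k - v' k)) ` (ws_outputs \<epsilon> d w m c \<times> ws_outputs \<epsilon> d w m c))"

end

theory Submission
  imports Defs
begin

definition vl :: "real \<Rightarrow> (nat \<Rightarrow> real) \<Rightarrow> (nat \<Rightarrow> real) \<Rightarrow> real \<Rightarrow> nat \<Rightarrow> bool \<Rightarrow> real" where
  "vl s w m c j b = ((s + 1) * (if b then 1 else 0) - 1) / (s - 1) * ((w j - c) / m j) + c"

definition PP :: "real \<Rightarrow> nat \<Rightarrow> (nat \<Rightarrow> bool) pmf" where
  "PP s d = Pi_pmf {..<d} False (\<lambda>_. bernoulli_pmf (1 / (s + 1)))"

lemma mech_eq:
  "ws_mech \<epsilon> d w m c \<pi> = embed_pmf (\<lambda>j. if j < d then m j else 0) \<bind>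
     (\<lambda>j. map_pmf (\<lambda>fl k. if k < d then vl (sqrt (exp \<epsilon>)) w m c j (if fl k then k \<noteq> \<pi> j else k = \<pi> j) else 0)
        (PP (sqrt (exp \<epsilon>)) d))"
  unfolding ws_mech_def PP_def vl_def Let_def map_pmf_def by simp

lemma embed_props:
  fixes d :: nat
  assumes "\<And>j. j < d \<Longrightarrow> m j \<ge> 0" "(\<Sum>j<d. m j) = 1"
  shows "pmf (embed_pmf (\<lambda>j. if j < d then m j else 0)) j = (if j < d then m j else 0)"
    and "set_pmf (embed_pmf (\<lambda>j. if j < d then m j else 0)) = {j. j < d \<and> m j > 0}"
proof -
  have nn: "\<And>j. 0 \<le> (if j < d then m j else 0)" using assms(1) by auto
  have "(\<integral>\<^sup>+x. ennreal (if x < d then m x else 0) \<partial>count_space UNIV) = (\<Sum>x<d. ennreal (if x < d then m x else 0))"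
    by (rule nn_integral_count_space'[of "{..<d}"]) auto
  also have "\<dots> = ennreal (\<Sum>x<d. m x)" using assms(1) by (subst sum_ennreal) auto
  finally have i: "(\<integral>\<^sup>+x. ennreal (if x < d then m x else 0) \<partial>count_space UNIV) = 1" using assms(2) by simp
  show "pmf (embed_pmf (\<lambda>j. if j < d then m j else 0)) j = (if j < d then m j else 0)"
    by (rule pmf_embed_pmf[OF nn i])
  show "set_pmf (embed_pmf (\<lambda>j. if j < d then m j else 0)) = {j. j < d \<and> m j > 0}"
    using set_embed_pmf[OF nn i] assms(1) by force
qed

lemma PP_set:
  assumes "s > 1"
  shows "set_pmf (PP s d) = {fl. \<forall>x. x \<ge> d \<longrightarrow> fl x = False}"
proof -
  have "0 < 1 / (s + 1)" "1 / (s + 1) < 1" using assms by auto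
  then show ?thesis unfolding PP_def
    by (subst set_Pi_pmf) (auto simp: PiE_dflt_def)
qed

lemma PP_finite:
  assumes "s > 1"
  shows "finite (set_pmf (PP s d))"
proof -
  have "set_pmf (PP s d) \<subseteq> (\<lambda>S x. x \<in> S) ` Pow {..<d}"
  proof
    fix fl assume "fl \<in> set_pmf (PP s d)"
    then have "\<forall>x. x \<ge> d \<longrightarrow> fl x = False" using PP_set[OF assms] by auto
    then have "fl = (\<lambda>x. x \<in> {x. x < d \<and> fl x})" by (auto simp: fun_eq_iff) (meson not_le)
    then show "fl \<in> (\<lambda>S x. x \<in> S) ` Pow {..<d}" by blast
  qed
  then show ?thesis by (rule finite_subset) auto
qed

lemma PP_comp:
  assumes "s > 1" "k < d"
  shows "measure_pmf.expectation (PP s d) (\<lambda>fl. h (fl k) :: real) = h True / (s + 1) + h False * (s / (s + 1))"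
proof -
  have "measure_pmf.expectation (PP s d) (\<lambda>fl. h (fl k)) = measure_pmf.expectation (map_pmf (\<lambda>fl. fl k) (PP s d)) h"
    by simp
  also have "map_pmf (\<lambda>fl. fl k) (PP s d) = bernoulli_pmf (1 / (s + 1))"
    unfolding PP_def using assms by (subst Pi_pmf_component) auto
  also have "measure_pmf.expectation (bernoulli_pmf (1 / (s + 1))) h = h True / (s + 1) + h False * (s / (s + 1))"
    using assms by (subst integral_bernoulli_pmf) (auto simp: field_simps)
  finally show ?thesis .
qed

lemma outputs_eq:
  fixes d :: nat
  assumes s1: "sqrt (exp \<epsilon>) > 1"
    and mn: "\<And>j. j < d \<Longrightarrow> m j \<ge> 0" and ms: "(\<Sum>j<d. m j) = 1"
  shows "ws_outputs \<epsilon> d w m c =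
    {(\<lambda>k. if k < d then vl (sqrt (exp \<epsilon>)) w m c j (P k) else 0) | j P. j < d \<and> m j > 0}"
  (is "_ = ?R")
proof
  show "ws_outputs \<epsilon> d w m c \<subseteq> ?R"
    unfolding ws_outputs_def mech_eq using embed_props(2)[OF mn ms]
    by (auto simp: set_bind_pmf)
next
  show "?R \<subseteq> ws_outputs \<epsilon> d w m c"
  proof
    fix v assume "v \<in> ?R"
    then obtain j P where jP: "j < d" "m j > 0"
      and v: "v = (\<lambda>k. if k < d then vl (sqrt (exp \<epsilon>)) w m c j (P k) else 0)" by blast
    define fl where "fl = (\<lambda>k. k < d \<and> (P k \<noteq> (k = j)))"
    have vt: "is_vote d id" unfolding is_vote_def by simp
    have "fl \<in> set_pmf (PP (sqrt (exp \<epsilon>)) d)" using PP_set[OF s1] by (auto simp: fl_def)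
    moreover have "v = (\<lambda>k. if k < d then vl (sqrt (exp \<epsilon>)) w m c j (if fl k then k \<noteq> id j else k = id j) else 0)"
      unfolding v fl_def by (auto simp: fun_eq_iff)
    ultimately have "v \<in> set_pmf (ws_mech \<epsilon> d w m c id)"
      unfolding mech_eq using embed_props(2)[OF mn ms] jP by (auto simp: set_bind_pmf)
    then show "v \<in> ws_outputs \<epsilon> d w m c" unfolding ws_outputs_def using vt by blast
  qed
qed

theorem lemma10p1:
  fixes \<epsilon> s c :: real and n d :: nat and w m :: "nat \<Rightarrow> real"
    and J :: "nat set" and K t f :: "nat \<Rightarrow> real" and g :: "nat \<Rightarrow> nat \<Rightarrow> real"
  assumes eps: "\<epsilon> > 0"
    and n: "n \<ge> 1"
    and s_def: "s = sqrt (exp \<epsilon>)"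
    and w_noninc: "\<And>i j. i \<le> j \<Longrightarrow> j < d \<Longrightarrow> w j \<le> w i"
    and m_nonneg: "\<And>j. j < d \<Longrightarrow> m j \<ge> 0"
    and m_sum: "(\<Sum>j<d. m j) = 1"
    and J_def: "J = {j. j < d \<and> m j > 0}"
    and K_def: "\<And>j. j \<in> J \<Longrightarrow> K j = (w j - c) / m j"
    and t_def: "\<And>j. j \<in> J \<Longrightarrow> t j = \<bar>s / (s - 1) * K j + c\<bar>"
    and f_def: "\<And>j. j \<in> J \<Longrightarrow> f j = \<bar>-1 / (s - 1) * K j + c\<bar>"
    and g_def: "\<And>j b. j \<in> J \<Longrightarrow> b \<in> {0, 1} \<Longrightarrow>
                  g j b = (real b * s - (1 - real b)) / (s - 1) * K j"
  shows "risk_MM \<epsilon> n d w m c = real d / real n * (MAX j\<in>J. max (f j) (t j))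
    \<and> (\<forall>\<pi>. is_vote d \<pi> \<longrightarrow> risk_EM \<epsilon> n d w m c \<pi> =
           (\<Sum>j\<in>J. m j * ((s + real d - 1) * t j + (s * (real d - 1) + 1) * f j))
             / (real n * (s + 1)))
    \<and> risk_DD \<epsilon> d w m c =
           real d * ((MAX jb\<in>J \<times> {0, 1}. g (fst jb) (snd jb))
                   - (MIN jb\<in>J \<times> {0, 1}. g (fst jb) (snd jb)))"
proof -
  have s1: "s > 1" unfolding s_def using eps by (simp add: real_less_rsqrt)
  have d1: "d \<ge> 1" using m_sum by (cases d) auto
  have Jsub: "J \<subseteq> {..<d}" and finJ: "finite J" unfolding J_def by auto
  have Jne: "J \<noteq> {}"
  proof
    assume "J = {}"
    then have "\<And>j. j < d \<Longrightarrow> m j = 0" using m_nonneg unfolding J_def by force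
    then show False using m_sum by simp
  qed
  define out where "out j P = (\<lambda>k. if k < d then vl s w m c j (P k) else 0)" for j P
  have O: "ws_outputs \<epsilon> d w m c = {out j P | j P. j \<in> J}"
    using outputs_eq[of \<epsilon> d m w c] s1 m_nonneg m_sum unfolding s_def[symmetric] out_def J_def by simp
  have vT: "\<bar>vl s w m c j True\<bar> = t j" if "j \<in> J" for j
    using that s1 by (simp add: vl_def t_def K_def)
  have vF: "\<bar>vl s w m c j False\<bar> = f j" if "j \<in> J" for j
    using that s1 by (simp add: vl_def f_def K_def)
  have vG: "vl s w m c j b = g j (if b then 1 else 0) + c" if "j \<in> J" for j b
    using that s1 by (cases b) (simp_all add: vl_def g_def K_def)
  have l1out: "l1 d (out j P) = (\<Sum>k<d. \<bar>vl s w m c j (P k)\<bar>)" for j P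
    unfolding l1_def out_def by simp
  have outeq: "out j P = out j (\<lambda>k. k \<in> {k. k < d \<and> P k})" for j P
    unfolding out_def by (auto simp: fun_eq_iff)
  have finO: "finite (ws_outputs \<epsilon> d w m c)"
  proof -
    have "ws_outputs \<epsilon> d w m c \<subseteq> (\<lambda>(j, S). out j (\<lambda>k. k \<in> S)) ` (J \<times> Pow {..<d})"
    proof
      fix v assume "v \<in> ws_outputs \<epsilon> d w m c"
      then obtain j P where "j \<in> J" "v = out j P" unfolding O by blast
      then have "v = (\<lambda>(j, S). out j (\<lambda>k. k \<in> S)) (j, {k. k < d \<and> P k})"
        "(j, {k. k < d \<and> P k}) \<in> J \<times> Pow {..<d}" using outeq by auto
      then show "v \<in> (\<lambda>(j, S). out j (\<lambda>k. k \<in> S)) ` (J \<times> Pow {..<d})" by blast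
    qed
    then show ?thesis by (rule finite_subset) (use finJ in auto)
  qed
  define Mx where "Mx = (MAX j\<in>J. max (f j) (t j))"
  have MM: "risk_MM \<epsilon> n d w m c = real d / real n * Mx"
    unfolding risk_MM_def
  proof (rule Max_eqI)
    show "finite ((\<lambda>v. l1 d v / real n) ` ws_outputs \<epsilon> d w m c)" using finO by simp
  next
    fix y assume "y \<in> (\<lambda>v. l1 d v / real n) ` ws_outputs \<epsilon> d w m c"
    then obtain j P where j: "j \<in> J" and y: "y = l1 d (out j P) / real n" unfolding O by blast
    have "\<bar>vl s w m c j (P k)\<bar> \<le> Mx" for k
    proof -
      have "\<bar>vl s w m c j (P k)\<bar> \<le> max (f j) (t j)" using vT[OF j] vF[OF j] by (cases "P k") auto
      also have "\<dots> \<le> Mx" unfolding Mx_def using finJ j by (intro Max_ge) auto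
      finally show ?thesis .
    qed
    then have "l1 d (out j P) \<le> (\<Sum>k<d. Mx)" unfolding l1out by (intro sum_mono) auto
    then show "y \<le> real d / real n * Mx" unfolding y using n by (simp add: divide_right_mono)
  next
    have "Mx \<in> (\<lambda>j. max (f j) (t j)) ` J"
      unfolding Mx_def using finJ Jne by (intro Max_in) auto
    then obtain j0 where j0: "j0 \<in> J" "max (f j0) (t j0) = Mx" by blast
    define P where "P = (\<lambda>k::nat. t j0 \<ge> f j0)"
    have "\<bar>vl s w m c j0 (P k)\<bar> = Mx" for k
      using vT[OF j0(1)] vF[OF j0(1)] j0(2) unfolding P_def by (cases "f j0 \<le> t j0") auto
    then have "l1 d (out j0 P) / real n = real d / real n * Mx" unfolding l1out by simp
    moreover have "out j0 P \<in> ws_outputs \<epsilon> d w m c" unfolding O using j0 by blast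
    ultimately show "real d / real n * Mx \<in> (\<lambda>v. l1 d v / real n) ` ws_outputs \<epsilon> d w m c"
      by (metis image_eqI)
  qed
  define G where "G = (\<lambda>jb. g (fst jb) (snd jb))"
  define JB where "JB = J \<times> {0::nat, 1}"
  have finJB: "finite JB" and JBne: "JB \<noteq> {}" unfolding JB_def using finJ Jne by auto
  define Mg where "Mg = Max (G ` JB)"
  define mg where "mg = Min (G ` JB)"
  have vG': "vl s w m c j b = G (j, if b then 1 else 0) + c" "(j, if b then 1 else 0) \<in> JB"
    if "j \<in> J" for j b using vG[OF that] that unfolding G_def JB_def by auto
  have DD: "risk_DD \<epsilon> d w m c = real d * (Mg - mg)"
    unfolding risk_DD_def
  proof (rule Max_eqI)
    show "finite ((\<lambda>(v, v'). l1 d (\<lambda>k. v k - v' k)) ` (ws_outputs \<epsilon> d w m c \<times> ws_outputs \<epsilon> d w m c))"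
      using finO by simp
  next
    fix y assume "y \<in> (\<lambda>(v, v'). l1 d (\<lambda>k. v k - v' k)) ` (ws_outputs \<epsilon> d w m c \<times> ws_outputs \<epsilon> d w m c)"
    then obtain j P j' P' where j: "j \<in> J" "j' \<in> J" and y: "y = l1 d (\<lambda>k. out j P k - out j' P' k)"
    proof -
      from \<open>y \<in> _\<close> obtain v v' where "v \<in> ws_outputs \<epsilon> d w m c" "v' \<in> ws_outputs \<epsilon> d w m c"
        "y = l1 d (\<lambda>k. v k - v' k)" by auto
      then show ?thesis using that unfolding O by blast
    qed
    have y2: "y = (\<Sum>k<d. \<bar>vl s w m c j (P k) - vl s w m c j' (P' k)\<bar>)"
      unfolding y l1_def out_def by simp
    have "\<bar>vl s w m c j (P k) - vl s w m c j' (P' k)\<bar> \<le> Mg - mg" for k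
    proof -
      let ?a = "(j, if P k then 1 else 0::nat)" and ?b = "(j', if P' k then 1 else 0::nat)"
      have ab: "?a \<in> JB" "?b \<in> JB" using vG'(2) j by auto
      have "G ?a \<le> Mg" "G ?b \<le> Mg" "mg \<le> G ?a" "mg \<le> G ?b"
        unfolding Mg_def mg_def using ab finJB by auto
      then show ?thesis using vG'(1)[OF j(1), of "P k"] vG'(1)[OF j(2), of "P' k"] by auto
    qed
    then have "y \<le> (\<Sum>k<d. Mg - mg)" unfolding y2 by (intro sum_mono) auto
    then show "y \<le> real d * (Mg - mg)" by simp
  next
    have "Mg \<in> G ` JB" unfolding Mg_def using finJB JBne by (intro Max_in) auto
    then obtain a where a: "a \<in> JB" "G a = Mg" by blast
    have "mg \<in> G ` JB" unfolding mg_def using finJB JBne by (intro Min_in) auto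
    then obtain b where b: "b \<in> JB" "G b = mg" by blast
    define P where "P = (\<lambda>k::nat. snd a = 1)"
    define P' where "P' = (\<lambda>k::nat. snd b = 1)"
    have aJ: "fst a \<in> J" "(if snd a = 1 then 1 else 0) = snd a" using a(1) unfolding JB_def by auto
    have bJ: "fst b \<in> J" "(if snd b = 1 then 1 else 0) = snd b" using b(1) unfolding JB_def by auto
    have "\<bar>vl s w m c (fst a) (P k) - vl s w m c (fst b) (P' k)\<bar> = Mg - mg" for k
    proof -
      have "G a \<ge> G b" using a b finJB unfolding Mg_def mg_def
        by (metis Max_ge Min_le finite_imageI image_eqI order_trans)
      then show ?thesis using vG'(1)[OF aJ(1), of "P k"] vG'(1)[OF bJ(1), of "P' k"] aJ(2) bJ(2) a(2) b(2)
        unfolding P_def P'_def by (simp add: prod.collapse)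
    qed
    then have "l1 d (\<lambda>k. out (fst a) P k - out (fst b) P' k) = real d * (Mg - mg)"
      unfolding l1_def out_def by simp
    moreover have "(out (fst a) P, out (fst b) P') \<in> ws_outputs \<epsilon> d w m c \<times> ws_outputs \<epsilon> d w m c"
      unfolding O using aJ bJ by blast
    ultimately show "real d * (Mg - mg) \<in> (\<lambda>(v, v'). l1 d (\<lambda>k. v k - v' k)) ` (ws_outputs \<epsilon> d w m c \<times> ws_outputs \<epsilon> d w m c)"
      by force
  qed
  have EM: "risk_EM \<epsilon> n d w m c \<pi> =
           (\<Sum>j\<in>J. m j * ((s + real d - 1) * t j + (s * (real d - 1) + 1) * f j))
             / (real n * (s + 1))" if pv: "is_vote d \<pi>" for \<pi>
  proof -
    define Bt where "Bt j fl = (\<lambda>k. if fl k then k \<noteq> \<pi> j else k = \<pi> j)" for j and fl :: "nat \<Rightarrow> bool"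
    define E where "E j = measure_pmf.expectation (PP s d) (\<lambda>fl. l1 d (out j (Bt j fl)) / real n)" for j
    have mech: "ws_mech \<epsilon> d w m c \<pi> = embed_pmf (\<lambda>j. if j < d then m j else 0) \<bind>
       (\<lambda>j. map_pmf (\<lambda>fl. out j (Bt j fl)) (PP s d))"
      unfolding mech_eq s_def[symmetric] out_def Bt_def ..
    have "risk_EM \<epsilon> n d w m c \<pi> = (\<Sum>j<d. pmf (embed_pmf (\<lambda>j. if j < d then m j else 0)) j *\<^sub>R
        measure_pmf.expectation (map_pmf (\<lambda>fl. out j (Bt j fl)) (PP s d)) (\<lambda>v. l1 d v / real n))"
      unfolding risk_EM_def mech
      by (rule pmf_expectation_bind) (use PP_finite[OF s1] embed_props(2)[OF m_nonneg m_sum] in auto)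
    also have "\<dots> = (\<Sum>j<d. m j * E j)"
      using embed_props(1)[OF m_nonneg m_sum] by (simp add: E_def)
    also have "\<dots> = (\<Sum>j\<in>J. m j * E j)"
      by (rule sum.mono_neutral_right) (use Jsub m_nonneg in \<open>auto simp: J_def less_le\<close>)
    also have "\<dots> = (\<Sum>j\<in>J. m j * (((s + real d - 1) * t j + (s * (real d - 1) + 1) * f j)
             / (real n * (s + 1))))"
    proof (rule sum.cong[OF refl])
      fix j assume j: "j \<in> J"
      have pj: "\<pi> j < d" using pv j Jsub unfolding is_vote_def by (auto dest: bij_betw_apply)
      define h where "h k b = \<bar>vl s w m c j (if b then k \<noteq> \<pi> j else k = \<pi> j)\<bar>" for k b
      have "E j = measure_pmf.expectation (PP s d) (\<lambda>fl. (\<Sum>k<d. h k (fl k))) / real n"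
        unfolding E_def l1out Bt_def h_def by simp
      also have "measure_pmf.expectation (PP s d) (\<lambda>fl. (\<Sum>k<d. h k (fl k))) =
          (\<Sum>k<d. measure_pmf.expectation (PP s d) (\<lambda>fl. h k (fl k)))"
        by (rule Bochner_Integration.integral_sum) (auto intro: integrable_measure_pmf_finite[OF PP_finite[OF s1]])
      also have "\<dots> = (\<Sum>k<d. h k True / (s + 1) + h k False * (s / (s + 1)))"
        using PP_comp[OF s1] by simp
      also have "\<dots> = (h (\<pi> j) True / (s + 1) + h (\<pi> j) False * (s / (s + 1))) +
          (\<Sum>k\<in>{..<d} - {\<pi> j}. h k True / (s + 1) + h k False * (s / (s + 1)))"
        using pj by (subst sum.remove[of _ "\<pi> j"]) auto
      also have "(\<Sum>k\<in>{..<d} - {\<pi> j}. h k True / (s + 1) + h k False * (s / (s + 1))) =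
          (\<Sum>k\<in>{..<d} - {\<pi> j}. t j / (s + 1) + f j * (s / (s + 1)))"
        using vT[OF j] vF[OF j] by (intro sum.cong) (auto simp: h_def)
      also have "\<dots> = (real d - 1) * (t j / (s + 1) + f j * (s / (s + 1)))"
        using pj d1 by (simp add: of_nat_diff)
      finally have E1: "E j = (h (\<pi> j) True / (s + 1) + h (\<pi> j) False * (s / (s + 1)) +
          (real d - 1) * (t j / (s + 1) + f j * (s / (s + 1)))) / real n" .
      have "h (\<pi> j) True = f j" "h (\<pi> j) False = t j"
        using vT[OF j] vF[OF j] by (auto simp: h_def)
      with E1 have E2: "E j = (f j / (s + 1) + t j * (s / (s + 1)) +
          (real d - 1) * (t j / (s + 1) + f j * (s / (s + 1)))) / real n" by simp
      then show "m j * E j = m j * (((s + real d - 1) * t j + (s * (real d - 1) + 1) * f j)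
             / (real n * (s + 1)))"
      proof -
        have sp: "s + 1 \<noteq> 0" using s1 by simp
        have "f j / (s + 1) + t j * (s / (s + 1)) + (real d - 1) * (t j / (s + 1) + f j * (s / (s + 1)))
          = ((s + real d - 1) * t j + (s * (real d - 1) + 1) * f j) / (s + 1)"
          using sp by (simp add: divide_simps) (simp add: algebra_simps)
        then have "E j = ((s + real d - 1) * t j + (s * (real d - 1) + 1) * f j) / (real n * (s + 1))"
          using E2 by simp
        then show ?thesis by simp
      qed
    qed
    also have "\<dots> = (\<Sum>j\<in>J. m j * ((s + real d - 1) * t j + (s * (real d - 1) + 1) * f j))
             / (real n * (s + 1))"
      by (simp add: sum_divide_distrib)
    finally show ?thesis .
  qed
  show ?thesis using MM DD EM unfolding Mx_def Mg_def mg_def G_def JB_def by simp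
qed

end
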